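(* Let $K\ge 1$ and let an instance of ring grooming be $K$-quasi-uniform, and let $d=\max_{j\ne k} d_{jk}$. Then the minimum number of ADMs satisfies $$m\ \ge\ \frac{(n^2-1)\sqrt{d/(2cK)}}{4}.$$
   Context: Ring grooming. An instance consists of integers $n\ge 2$ (ring size) and $c\ge 1$ (capacity), and a finite list $L$ of unordered pairs $\{j,k\}$ with $j\ne k$, $j,k\in\{1,\dots,n\}$ (repetitions allowed); these are the traffic demands. Let $d_{jk}=d_{kj}$ be the number of times $\{j,k\}$ occurs in $L$ (the traffic matrix; $d_{jj}=0$). Let $C_n$ be the cycle graph on vertices $1,\dots,n$ in cyclic order, with edges $\{l,l+1\}$ for $1\le l<n$ and $\{n,1\}$. A solution uses some finite number $r$ of "rings", each a copy of $C_n$ in which every edge has capacity $c$. A routing specifies, for every ring $i$ and every pair $j<k$, nonnegative integers $t^0_{ijk},t^1_{ijk}$: the amounts of $\{j,k\}$-traffic sent on ring $i$ along each of the two arcs of $C_n$ between $j$ and $k$. It is feasible if $\sum_i (t^0_{ijk}+t^1_{ijk})=d_{jk}$ for all $j<k$, and for every ring $i$ and every edge $e$ of $C_n$ the total traffic routed on ring $i$ along arcs containing $e$ is at most $c$. Ring $i$ needs an ADM (add/drop multiplexer) at vertex $j$ iff some traffic with endpoint $j$ is routed on ring $i$. The cost of a routing is the total number of ADMs, i.e. the number of pairs (ring $i$, vertex $j$) at which an ADM is needed. $m=m(n,c,L)$ denotes the minimum cost over all feasible routings. The instance is called $K$-quasi-uniform if $d_{jk}\ge 1$ for all $j\ne k$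 and $d_{jk}/d_{j'k'}\le K$ for all $j\ne k$, $j'\ne k'$. *)

theory Defs
  imports Complex_Main
begin

text \<open>Traffic demands: a list of unordered pairs, each represented as a 2-element set.\<close>

definition valid_instance :: "nat \<Rightarrow> nat \<Rightarrow> nat set list \<Rightarrow> bool" where
  "valid_instance n c L \<longleftrightarrow> n \<ge> 2 \<and> c \<ge> 1 \<and>
     (\<forall>p \<in> set L. card p = 2 \<and> p \<subseteq> {1..n})"

definition traffic :: "nat set list \<Rightarrow> nat \<Rightarrow> nat \<Rightarrow> nat" where
  "traffic L j k = (if j = k then 0 else length (filter (\<lambda>p. p = {j, k}) L))"

text \<open>Edges of C_n are indexed by l in {1..n}: edge l is {l, l+1} for l < n and {n,1} for l = n.
  For j < k, arc 0 between j and k is the path j, j+1, ..., k, containing exactly the edges l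
  with j \<le> l < k; arc 1 is the other arc, containing the remaining edges.\<close>
definition on_arc0 :: "nat \<Rightarrow> nat \<Rightarrow> nat \<Rightarrow> bool" where
  "on_arc0 j k l \<longleftrightarrow> j \<le> l \<and> l < k"

definition feasible_routing ::
  "nat \<Rightarrow> nat \<Rightarrow> nat set list \<Rightarrow> nat \<Rightarrow> (nat \<Rightarrow> nat \<Rightarrow> nat \<Rightarrow> nat) \<Rightarrow> (nat \<Rightarrow> nat \<Rightarrow> nat \<Rightarrow> nat) \<Rightarrow> bool"
  where
  "feasible_routing n c L r t0 t1 \<longleftrightarrow>
     (\<forall>j \<in> {1..n}. \<forall>k \<in> {1..n}. j < k \<longrightarrow>
        (\<Sum>i<r. t0 i j k + t1 i j k) = traffic L j k) \<and>
     (\<forall>i<r. \<forall>l \<in> {1..n}.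
        (\<Sum>(j, k) \<in> {(j, k). j \<in> {1..n} \<and> k \<in> {1..n} \<and> j < k}.
            (if on_arc0 j k l then t0 i j k else t1 i j k)) \<le> c)"

definition needs_adm ::
  "nat \<Rightarrow> (nat \<Rightarrow> nat \<Rightarrow> nat \<Rightarrow> nat) \<Rightarrow> (nat \<Rightarrow> nat \<Rightarrow> nat \<Rightarrow> nat) \<Rightarrow> nat \<Rightarrow> nat \<Rightarrow> bool" where
  "needs_adm n t0 t1 i j \<longleftrightarrow>
     (\<exists>k \<in> {1..n}. (j < k \<and> t0 i j k + t1 i j k > 0) \<or> (k < j \<and> t0 i k j + t1 i k j > 0))"

definition routing_cost ::
  "nat \<Rightarrow> nat \<Rightarrow> (nat \<Rightarrow> nat \<Rightarrow> nat \<Rightarrow> nat) \<Rightarrow> (nat \<Rightarrow> nat \<Rightarrow> nat \<Rightarrow> nat) \<Rightarrow> nat" where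
  "routing_cost n r t0 t1 = card {(i, j). i < r \<and> j \<in> {1..n} \<and> needs_adm n t0 t1 i j}"

definition min_adms :: "nat \<Rightarrow> nat \<Rightarrow> nat set list \<Rightarrow> nat" where
  "min_adms n c L = Inf {routing_cost n r t0 t1 | r t0 t1. feasible_routing n c L r t0 t1}"

definition quasi_uniform :: "real \<Rightarrow> nat \<Rightarrow> nat set list \<Rightarrow> bool" where
  "quasi_uniform K n L \<longleftrightarrow>
     (\<forall>j \<in> {1..n}. \<forall>k \<in> {1..n}. j \<noteq> k \<longrightarrow> traffic L j k \<ge> 1) \<and>
     (\<forall>j \<in> {1..n}. \<forall>k \<in> {1..n}. \<forall>j' \<in> {1..n}. \<forall>k' \<in> {1..n}.
        j \<noteq> k \<longrightarrow> j' \<noteq> k' \<longrightarrow> real (traffic L j k) / real (traffic L j' k') \<le> K)"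

definition max_traffic :: "nat \<Rightarrow> nat set list \<Rightarrow> nat" where
  "max_traffic n L = Max {traffic L j k | j k. j \<in> {1..n} \<and> k \<in> {1..n} \<and> j \<noteq> k}"

end

theory Submission
  imports Defs
begin

definition PP :: "nat \<Rightarrow> (nat \<times> nat) set" where
  "PP n = {(j,k). j \<in> {1..n} \<and> k \<in> {1..n} \<and> j < k}"

lemma finite_PP: "finite (PP n)"
  unfolding PP_def by (rule finite_subset[of _ "{1..n}\<times>{1..n}"]) auto

definition wt :: "nat \<Rightarrow> nat \<Rightarrow> nat \<Rightarrow> real" where
  "wt n j k = real (k-j) * (real n - real (k-j)) / real n"

lemma wt_props:
  assumes "1 \<le> j" "j < k" "k \<le> n"
  shows "wt n j k \<le> real (k-j)" "wt n j k \<le> real (n-(k-j))" "wt n j k \<le> real n / 4" "wt n j k \<ge> 0"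
proof -
  define d where "d = real (k-j)"
  define N where "N = real n"
  have d0: "0 < d" "d \<le> N" using assms by (auto simp: d_def N_def)
  have N0: "N > 0" using d0 by linarith
  have w: "wt n j k = d * (N - d) / N" by (simp add: wt_def d_def N_def)
  have nd: "real (n-(k-j)) = N - d" using assms by (simp add: d_def N_def of_nat_diff)
  show "wt n j k \<le> real (k-j)" unfolding w d_def[symmetric] using d0 N0
    by (simp add: divide_le_eq mult_left_mono)
  have "d*(N-d) \<le> N*(N-d)" by (rule mult_right_mono) (use d0 in auto)
  then show "wt n j k \<le> real (n-(k-j))" unfolding w nd using d0 N0
    by (simp add: divide_le_eq mult.commute)
  have "0 \<le> (N - 2*d)^2" by simp
  hence "4 * (d * (N - d)) \<le> N * N" by (simp add: power2_eq_square algebra_simps)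
  thus "wt n j k \<le> real n / 4" unfolding w N_def[symmetric] using N0
    by (simp add: divide_le_eq field_simps)
  show "wt n j k \<ge> 0" unfolding w using d0 N0 by simp
qed

lemma inner_count:
  assumes "1 \<le> j" "j < k" "k \<le> n"
  shows "(\<Sum>l\<in>{1..n}. if on_arc0 j k l then (a::nat) else b) = a*(k-j) + b*(n-(k-j))"
proof -
  have "(\<Sum>l\<in>{1..n}. if on_arc0 j k l then a else b) =
     (\<Sum>l\<in>{1..n} \<inter> {l. on_arc0 j k l}. a) + (\<Sum>l\<in>{1..n} \<inter> - {l. on_arc0 j k l}. b)"
    by (rule sum.If_cases) simp
  moreover have e1: "{1..n} \<inter> {l. on_arc0 j k l} = {j..<k}" using assms by (auto simp: on_arc0_def)
  moreover have e2: "{1..n} \<inter> - {l. on_arc0 j k l} = {1..n} - {j..<k}" by (auto simp: on_arc0_def)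
  moreover have "card ({1..n} - {j..<k}) = n - (k-j)"
    using assms by (subst card_Diff_subset) auto
  ultimately show ?thesis by (simp add: mult.commute)
qed

lemma load_nat:
  assumes "feasible_routing n c L r t0 t1" "i < r"
  shows "(\<Sum>(j,k)\<in>PP n. t0 i j k * (k-j) + t1 i j k * (n-(k-j))) \<le> n*c"
proof -
  have cap: "\<And>l. l\<in>{1..n} \<Longrightarrow> (\<Sum>(j,k)\<in>PP n. (if on_arc0 j k l then t0 i j k else t1 i j k)) \<le> c"
    using assms unfolding feasible_routing_def PP_def by blast
  have "(\<Sum>l\<in>{1..n}. \<Sum>(j,k)\<in>PP n. (if on_arc0 j k l then t0 i j k else t1 i j k)) \<le> (\<Sum>l\<in>{1..n}. c)"
    by (rule sum_mono) (rule cap)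
  also have "\<dots> = n * c" by simp
  finally have A: "(\<Sum>l\<in>{1..n}. \<Sum>(j,k)\<in>PP n. (if on_arc0 j k l then t0 i j k else t1 i j k)) \<le> n*c" .
  have "(\<Sum>l\<in>{1..n}. \<Sum>(j,k)\<in>PP n. (if on_arc0 j k l then t0 i j k else t1 i j k))
      = (\<Sum>(j,k)\<in>PP n. \<Sum>l\<in>{1..n}. (if on_arc0 j k l then t0 i j k else t1 i j k))"
    by (subst sum.swap) (simp add: case_prod_beta)
  also have "\<dots> = (\<Sum>(j,k)\<in>PP n. t0 i j k * (k-j) + t1 i j k * (n-(k-j)))"
  proof (rule sum.cong[OF refl])
    fix p assume "p \<in> PP n"
    then obtain j k where p: "p = (j,k)" "1 \<le> j" "j < k" "k \<le> n" by (auto simp: PP_def)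
    show "(case p of (j,k) \<Rightarrow> \<Sum>l\<in>{1..n}. (if on_arc0 j k l then t0 i j k else t1 i j k)) =
          (case p of (j,k) \<Rightarrow> t0 i j k * (k-j) + t1 i j k * (n-(k-j)))"
      unfolding p(1) using inner_count[OF p(2-4)] by simp
  qed
  finally show ?thesis using A by simp
qed


lemma load_real:
  assumes "feasible_routing n c L r t0 t1" "i < r"
  shows "(\<Sum>(j,k)\<in>PP n. wt n j k * real (t0 i j k + t1 i j k)) \<le> real n * real c"
proof -
  have "(\<Sum>(j,k)\<in>PP n. wt n j k * real (t0 i j k + t1 i j k))
     \<le> (\<Sum>(j,k)\<in>PP n. real (t0 i j k * (k-j) + t1 i j k * (n-(k-j))))"
  proof (rule sum_mono)
    fix p assume "p \<in> PP n"
    then obtain j k where p: "p = (j,k)" "1 \<le> j" "j < k" "k \<le> n" by (auto simp: PP_def)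
    note W = wt_props[OF p(2-4)]
    have "wt n j k * real (t0 i j k) \<le> real (k-j) * real (t0 i j k)"
      by (rule mult_right_mono) (use W in auto)
    moreover have "wt n j k * real (t1 i j k) \<le> real (n-(k-j)) * real (t1 i j k)"
      by (rule mult_right_mono) (use W in auto)
    ultimately show "(case p of (j,k) \<Rightarrow> wt n j k * real (t0 i j k + t1 i j k))
        \<le> (case p of (j,k) \<Rightarrow> real (t0 i j k * (k-j) + t1 i j k * (n-(k-j))))"
      unfolding p(1) by (simp only: case_prod_conv of_nat_add of_nat_mult distrib_left) (simp add: mult.commute)
  qed
  also have "\<dots> = real (\<Sum>(j,k)\<in>PP n. t0 i j k * (k-j) + t1 i j k * (n-(k-j)))"
    by (simp add: of_nat_sum case_prod_beta)
  also have "\<dots> \<le> real (n*c)" using load_nat[OF assms] by linarith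
  finally show ?thesis by simp
qed

definition SS :: "nat \<Rightarrow> (nat \<Rightarrow> nat \<Rightarrow> nat \<Rightarrow> nat) \<Rightarrow> (nat \<Rightarrow> nat \<Rightarrow> nat \<Rightarrow> nat) \<Rightarrow> nat \<Rightarrow> nat set" where
  "SS n t0 t1 i = {j \<in> {1..n}. needs_adm n t0 t1 i j}"

lemma finite_SS: "finite (SS n t0 t1 i)" unfolding SS_def by simp

lemma adm_pair:
  assumes "(j,k) \<in> PP n" "t0 i j k + t1 i j k > 0"
  shows "j \<in> SS n t0 t1 i" "k \<in> SS n t0 t1 i"
  using assms unfolding SS_def needs_adm_def PP_def by auto

lemma card_lt_pairs:
  assumes "finite S"
  shows "2 * card {(j,k) \<in> S \<times> S. (j::nat) < k} \<le> card S ^ 2"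
proof -
  let ?T = "{(j,k) \<in> S \<times> S. (j::nat) < k}"
  let ?U = "{(j,k) \<in> S \<times> S. (j::nat) > k}"
  have fT: "finite ?T" by (rule finite_subset[of _ "S \<times> S"]) (use assms in auto)
  have fU: "finite ?U" by (rule finite_subset[of _ "S \<times> S"]) (use assms in auto)
  have "?U = prod.swap ` ?T" by auto
  hence cU: "card ?U = card ?T" by (simp add: card_image)
  have "card ?T + card ?U = card (?T \<union> ?U)" by (rule card_Un_disjoint[symmetric]) (use fT fU in auto)
  also have "\<dots> \<le> card (S \<times> S)" by (rule card_mono) (use assms in auto)
  finally show ?thesis using cU by (simp add: card_cartesian_product power2_eq_square)
qed


lemma amgm_sqrt:
  assumes "(x::real) \<ge> 0" "l > 0"
  shows "sqrt x \<le> x / (2*l) + l/2"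
proof -
  have "0 \<le> (sqrt x - l)^2" by simp
  also have "\<dots> = x - 2*l*sqrt x + l^2" using assms by (simp add: power2_eq_square algebra_simps)
  finally have "2*l*sqrt x \<le> x + l^2" by simp
  thus ?thesis using assms by (simp add: field_simps power2_eq_square)
qed

lemma ring_bound:
  assumes feas: "feasible_routing n c L r t0 t1" and ir: "i < r" and c1: "c \<ge> 1"
  shows "(\<Sum>(j,k)\<in>PP n. wt n j k * sqrt (real (t0 i j k + t1 i j k)))
          \<le> real n * real (card (SS n t0 t1 i)) * (sqrt (2*real c)/4)"
proof -
  define S where "S = SS n t0 t1 i"
  define a where "a = real (card S)"
  define s where "s = sqrt (2*real c)/4"
  define tau where "tau = (\<lambda>j k. real (t0 i j k + t1 i j k))"
  have s0: "s > 0" using c1 by (simp add: s_def)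
  have cs: "real c = 8 * s^2" using c1 by (simp add: s_def power_divide)
  show ?thesis
  proof (cases "card S = 0")
    case True
    hence Se: "S = {}" using finite_SS S_def by auto
    have "(\<Sum>(j,k)\<in>PP n. wt n j k * sqrt (real (t0 i j k + t1 i j k))) = 0"
    proof (rule sum.neutral, clarify)
      fix j k assume "(j,k) \<in> PP n"
      hence "\<not> (t0 i j k + t1 i j k > 0)" using adm_pair(1)[of j k n] Se S_def by blast
      thus "wt n j k * sqrt (real (t0 i j k + t1 i j k)) = 0" by simp
    qed
    thus ?thesis using True S_def by simp
  next
    case False
    hence a0: "a > 0" by (simp add: a_def)
    define l where "l = 8*s/a"
    have l0: "l > 0" using s0 a0 by (simp add: l_def)
    define Q where "Q = {p \<in> PP n. case p of (j,k) \<Rightarrow> t0 i j k + t1 i j k > 0}"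
    have fQ: "finite Q" using finite_PP Q_def by simp
    have "(\<Sum>(j,k)\<in>PP n. wt n j k * sqrt (tau j k))
        \<le> (\<Sum>(j,k)\<in>PP n. wt n j k * tau j k / (2*l) + (if t0 i j k + t1 i j k > 0 then wt n j k * l / 2 else 0))"
    proof (rule sum_mono, clarify)
      fix j k assume "(j,k) \<in> PP n"
      hence W: "wt n j k \<ge> 0" using wt_props(4)[of j k n] by (auto simp: PP_def)
      show "wt n j k * sqrt (tau j k) \<le> wt n j k * tau j k / (2*l) + (if t0 i j k + t1 i j k > 0 then wt n j k * l / 2 else 0)"
      proof (cases "t0 i j k + t1 i j k > 0")
        case True
        have "wt n j k * sqrt (tau j k) \<le> wt n j k * (tau j k / (2*l) + l/2)"
          by (rule mult_left_mono[OF amgm_sqrt W]) (use l0 in \<open>auto simp: tau_def\<close>)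
        thus ?thesis using True by (simp add: algebra_simps)
      next
        case False
        thus ?thesis by (simp add: tau_def)
      qed
    qed
    also have "\<dots> = (\<Sum>(j,k)\<in>PP n. wt n j k * tau j k) / (2*l) + (\<Sum>p\<in>Q. wt n (fst p) (snd p)) * (l/2)"
    proof -
      have "(\<Sum>(j,k)\<in>PP n. wt n j k * tau j k / (2*l) + (if t0 i j k + t1 i j k > 0 then wt n j k * l / 2 else 0))
          = (\<Sum>p\<in>PP n. wt n (fst p) (snd p) * tau (fst p) (snd p) / (2*l)) +
            (\<Sum>p\<in>PP n. if (case p of (j,k) \<Rightarrow> t0 i j k + t1 i j k > 0) then wt n (fst p) (snd p) * l / 2 else 0)"
        by (simp add: sum.distrib split_def times_divide_eq_right)
      also have "(\<Sum>p\<in>PP n. if (case p of (j,k) \<Rightarrow> t0 i j k + t1 i j k > 0) then wt n (fst p) (snd p) * l / 2 else 0)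
          = (\<Sum>p\<in>Q. wt n (fst p) (snd p) * l / 2)"
        unfolding Q_def by (rule sum.inter_filter[OF finite_PP, symmetric])
      also have "\<dots> = (\<Sum>p\<in>Q. wt n (fst p) (snd p)) * (l/2)" by (simp add: sum_distrib_right[symmetric] sum_divide_distrib[symmetric])
      also have "(\<Sum>p\<in>PP n. wt n (fst p) (snd p) * tau (fst p) (snd p) / (2*l))
          = (\<Sum>(j,k)\<in>PP n. wt n j k * tau j k) / (2*l)"
        by (simp add: sum_divide_distrib split_def)
      finally show ?thesis .
    qed
    also have "\<dots> \<le> real n * a * s / 2 + real n * a * s / 2"
    proof (rule add_mono)
      have "(\<Sum>(j,k)\<in>PP n. wt n j k * tau j k) \<le> real n * real c"
        using load_real[OF feas ir] by (simp add: tau_def)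
      hence "(\<Sum>(j,k)\<in>PP n. wt n j k * tau j k) / (2*l) \<le> real n * real c / (2*l)"
        using l0 by (simp add: divide_right_mono)
      also have "\<dots> = real n * a * s / 2" using s0 a0 unfolding l_def cs
        by (simp add: field_simps power2_eq_square)
      finally show "(\<Sum>(j,k)\<in>PP n. wt n j k * tau j k) / (2*l) \<le> real n * a * s / 2" .
    next
      have "(\<Sum>p\<in>Q. wt n (fst p) (snd p)) \<le> (\<Sum>p\<in>Q. real n / 4)"
      proof (rule sum_mono)
        fix p assume "p \<in> Q"
        then obtain j k where p: "p = (j,k)" "1 \<le> j" "j < k" "k \<le> n" by (auto simp: Q_def PP_def)
        show "wt n (fst p) (snd p) \<le> real n / 4" using wt_props(3)[OF p(2-4)] p(1) by simp
      qed
      also have "\<dots> = real (card Q) * (real n / 4)" by simp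
      finally have Y1: "(\<Sum>p\<in>Q. wt n (fst p) (snd p)) \<le> real (card Q) * (real n / 4)" .
      have cQ1: "card Q \<le> card {(j,k) \<in> S \<times> S. j < k}"
      proof -
        have "Q \<subseteq> {(j,k) \<in> S \<times> S. j < k}"
        proof
          fix p assume "p \<in> Q"
          then obtain j k where p: "p = (j,k)" "(j,k) \<in> PP n" "t0 i j k + t1 i j k > 0" by (auto simp: Q_def)
          have "j \<in> S" "k \<in> S" using adm_pair[of j k n t0 i t1] p(2,3) by (simp_all add: S_def)
          moreover have "j < k" using p(2) by (simp add: PP_def)
          ultimately show "p \<in> {(j,k) \<in> S \<times> S. j < k}" using p(1) by simp
        qed
        moreover have "finite {(j,k) \<in> S \<times> S. j < k}"
          by (rule finite_subset[of _ "S \<times> S"]) (auto simp: S_def finite_SS)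
        ultimately show ?thesis by (simp add: card_mono)
      qed
      have cQ2: "2 * card {(j,k) \<in> S \<times> S. j < k} \<le> card S ^ 2"
        using card_lt_pairs[of S] by (simp add: S_def finite_SS)
      have "2 * card Q \<le> card S ^ 2" using cQ1 cQ2 by linarith
      hence "real (2 * card Q) \<le> real (card S ^ 2)" by (simp only: of_nat_le_iff)
      hence cQ: "real (card Q) \<le> a^2/2" by (simp add: a_def)
      have "real (card Q) * (real n / 4) \<le> a^2/2 * (real n / 4)"
        by (rule mult_right_mono[OF cQ]) simp
      with Y1 have Y: "(\<Sum>p\<in>Q. wt n (fst p) (snd p)) \<le> a^2/2 * real n / 4" by (simp only: times_divide_eq_right times_divide_eq_left mult.assoc)
      have "(\<Sum>p\<in>Q. wt n (fst p) (snd p)) * (l/2) \<le> a^2/2 * real n / 4 * (l/2)"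
        by (rule mult_right_mono[OF Y]) (use l0 in auto)
      also have "\<dots> = real n * a * s / 2" using a0 unfolding l_def by (simp add: field_simps power2_eq_square)
      finally show "(\<Sum>p\<in>Q. wt n (fst p) (snd p)) * (l/2) \<le> real n * a * s / 2" .
    qed
    finally show ?thesis by (simp add: tau_def a_def s_def S_def)
  qed
qed


lemma G_closed: "(\<Sum>d\<in>{1..m}. real d * (N - real d)) = N * real m * (real m + 1) / 2 - real m * (real m + 1) * (2 * real m + 1) / 6"
  by (induction m) (simp_all add: field_simps power2_eq_square)

lemma PP_Suc: "PP (Suc n) = PP n \<union> (\<lambda>j. (j, Suc n)) ` {1..n}"
  unfolding PP_def by (auto simp: le_Suc_eq)

lemma H_closed:
  "(\<Sum>(j,k)\<in>PP n. real (k-j) * (N - real (k-j))) = N * (real n ^ 3 - real n) / 6 - real n ^ 2 * (real n ^ 2 - 1) / 12"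
proof (induction n)
  case 0
  have "PP 0 = {}" by (auto simp: PP_def)
  thus ?case by simp
next
  case (Suc n)
  have disj: "PP n \<inter> (\<lambda>j. (j, Suc n)) ` {1..n} = {}" by (auto simp: PP_def)
  have "(\<Sum>(j,k)\<in>PP (Suc n). real (k-j) * (N - real (k-j)))
      = (\<Sum>(j,k)\<in>PP n. real (k-j) * (N - real (k-j))) + (\<Sum>(j,k)\<in>(\<lambda>j. (j, Suc n)) ` {1..n}. real (k-j) * (N - real (k-j)))"
    unfolding PP_Suc by (rule sum.union_disjoint) (use disj finite_PP in auto)
  also have "(\<Sum>(j,k)\<in>(\<lambda>j. (j, Suc n)) ` {1..n}. real (k-j) * (N - real (k-j)))
      = (\<Sum>j\<in>{1..n}. real (Suc n - j) * (N - real (Suc n - j)))"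
    by (subst sum.reindex) (auto simp: inj_on_def)
  also have "\<dots> = (\<Sum>d\<in>{1..n}. real d * (N - real d))"
    by (rule sum.reindex_bij_witness[of _ "\<lambda>d. Suc n - d" "\<lambda>j. Suc n - j"]) auto
  finally show ?case unfolding Suc.IH G_closed
    by (simp add: field_simps power2_eq_square power3_eq_cube)
qed

lemma wt_sum:
  assumes "n \<ge> 1"
  shows "(\<Sum>(j,k)\<in>PP n. wt n j k) = real n * (real n ^ 2 - 1) / 12"
proof -
  have "(\<Sum>(j,k)\<in>PP n. wt n j k) = (\<Sum>(j,k)\<in>PP n. real (k-j) * (real n - real (k-j))) / real n"
    unfolding wt_def by (simp add: sum_divide_distrib case_prod_beta)
  also have "\<dots> = real n * (real n ^ 2 - 1) / 12" unfolding H_closed using assms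
    by (simp add: field_simps power2_eq_square power3_eq_cube)
  finally show ?thesis .
qed


lemma sqrt_sum_le:
  assumes "finite A" "\<And>x. x \<in> A \<Longrightarrow> f x \<ge> (0::real)"
  shows "sqrt (sum f A) \<le> (\<Sum>x\<in>A. sqrt (f x))"
  using assms
proof (induction A rule: finite_induct)
  case empty thus ?case by simp
next
  case (insert x F)
  have "sqrt (sum f (insert x F)) = sqrt (f x + sum f F)" using insert by simp
  also have "\<dots> \<le> sqrt (f x) + sqrt (sum f F)"
    by (rule sqrt_add_le_add_sqrt) (use insert in \<open>auto intro: sum_nonneg\<close>)
  also have "\<dots> \<le> sqrt (f x) + (\<Sum>y\<in>F. sqrt (f y))" using insert by simp
  finally show ?case using insert by simp
qed

lemma max_traffic_le:
  assumes "n \<ge> 2" "quasi_uniform K n L" "j \<in> {1..n}" "k \<in> {1..n}" "j \<noteq> k"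
  shows "real (max_traffic n L) \<le> K * real (traffic L j k)"
proof -
  let ?M = "{traffic L j k | j k. j \<in> {1..n} \<and> k \<in> {1..n} \<and> j \<noteq> k}"
  have "?M \<subseteq> (\<lambda>(j,k). traffic L j k) ` ({1..n}\<times>{1..n})" by auto
  hence fin: "finite ?M" by (rule finite_subset) simp
  have "traffic L 1 2 \<in> ?M" using assms(1) by force
  hence ne: "?M \<noteq> {}" by blast
  have "max_traffic n L \<in> ?M" unfolding max_traffic_def by (rule Max_in[OF fin ne])
  then obtain j0 k0 where jk0: "max_traffic n L = traffic L j0 k0" "j0 \<in> {1..n}" "k0 \<in> {1..n}" "j0 \<noteq> k0" by blast
  have t1: "traffic L j k \<ge> 1" using assms(2-5) unfolding quasi_uniform_def by blast
  have "real (traffic L j0 k0) / real (traffic L j k) \<le> K"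
    using assms(2-5) jk0(2-4) unfolding quasi_uniform_def by blast
  thus ?thesis using t1 jk0(1) by (simp add: divide_le_eq)
qed

lemma exists_feasible:
  assumes "valid_instance n c L"
  shows "\<exists>r t0 t1. feasible_routing n c L r t0 t1"
proof -
  define t0 where "t0 = (\<lambda>i j k. if L ! i = {j,k} then (1::nat) else 0)"
  define t1 where "t1 = (\<lambda>(i::nat) (j::nat) (k::nat). (0::nat))"
  have c1: "c \<ge> 1" using assms by (simp add: valid_instance_def)
  have A: "(\<Sum>i<length L. t0 i j k + t1 i j k) = traffic L j k" if "j < k" for j k
  proof -
    have "(\<Sum>i<length L. t0 i j k + t1 i j k) = (\<Sum>i\<in>{..<length L}. if L ! i = {j,k} then 1 else 0)"
      by (simp add: t0_def t1_def)
    also have "\<dots> = card {i \<in> {..<length L}. L ! i = {j,k}}"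
      by (simp add: sum.inter_filter[symmetric])
    also have "\<dots> = length (filter (\<lambda>p. p = {j,k}) L)"
      by (simp add: length_filter_conv_card)
    finally show ?thesis using that by (simp add: traffic_def)
  qed
  have B: "(\<Sum>(j, k) \<in> {(j, k). j \<in> {1..n} \<and> k \<in> {1..n} \<and> j < k}.
            (if on_arc0 j k l then t0 i j k else t1 i j k)) \<le> c" for i l
  proof -
    have "(\<Sum>(j, k) \<in> PP n. (if on_arc0 j k l then t0 i j k else t1 i j k))
       \<le> (\<Sum>p \<in> PP n. if L ! i = {fst p, snd p} then 1 else 0)"
    proof (rule sum_mono)
      fix p assume "p \<in> PP n"
      obtain j k where p: "p = (j,k)" by fastforce
      show "(case p of (j, k) \<Rightarrow> (if on_arc0 j k l then t0 i j k else t1 i j k))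
             \<le> (if L ! i = {fst p, snd p} then 1 else 0)"
        unfolding p t0_def t1_def by simp
    qed
    also have "\<dots> = card {p \<in> PP n. L ! i = {fst p, snd p}}"
      by (simp add: sum.inter_filter[OF finite_PP, symmetric])
    also have "\<dots> \<le> 1"
    proof -
      have "finite {p \<in> PP n. L ! i = {fst p, snd p}}" using finite_PP by simp
      moreover have "\<forall>x\<in>{p \<in> PP n. L ! i = {fst p, snd p}}. \<forall>y\<in>{p \<in> PP n. L ! i = {fst p, snd p}}. x = y"
      proof (intro ballI)
        fix x y assume x: "x \<in> {p \<in> PP n. L ! i = {fst p, snd p}}" and y: "y \<in> {p \<in> PP n. L ! i = {fst p, snd p}}"
        obtain j k where xx: "x = (j,k)" by fastforce
        obtain j' k' where yy: "y = (j',k')" by fastforce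
        have xa: "x \<in> PP n" "L ! i = {fst x, snd x}" using x by (simp_all only: mem_Collect_eq)
        have ya: "y \<in> PP n" "L ! i = {fst y, snd y}" using y by (simp_all only: mem_Collect_eq)
        have lt: "j < k" "j' < k'" using xa(1) ya(1) xx yy by (simp_all add: PP_def)
        have "L ! i = {j,k}" "L ! i = {j',k'}" using xa(2) ya(2) xx yy by (simp_all only: fst_conv snd_conv)
        hence "{j,k} = {j',k'}" by (rule trans[OF sym])
        hence "(j = j' \<and> k = k') \<or> (j = k' \<and> k = j')" by (simp only: doubleton_eq_iff)
        thus "x = y" using lt xx yy by auto
      qed
      ultimately have "card {p \<in> PP n. L ! i = {fst p, snd p}} \<le> Suc 0" by (simp only: card_le_Suc0_iff_eq)
      thus ?thesis by simp
    qed
    finally show ?thesis using c1 by (simp add: PP_def)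
  qed
  have "feasible_routing n c L (length L) t0 t1"
    unfolding feasible_routing_def using A B by blast
  thus ?thesis by blast
qed


lemma cost_sum: "routing_cost n r t0 t1 = (\<Sum>i<r. card (SS n t0 t1 i))"
proof -
  have "{(i, j). i < r \<and> j \<in> {1..n} \<and> needs_adm n t0 t1 i j} = (SIGMA i:{..<r}. SS n t0 t1 i)"
    by (auto simp: SS_def)
  thus ?thesis unfolding routing_cost_def by (simp add: card_SigmaI finite_SS)
qed

lemma cost_bound:
  assumes val: "valid_instance n c L" and K1: "K \<ge> 1" and qu: "quasi_uniform K n L"
    and feas: "feasible_routing n c L r t0 t1"
  shows "(real n ^ 2 - 1) * sqrt (real (max_traffic n L) / (2 * real c * K)) / 4 \<le> real (routing_cost n r t0 t1)"
proof -
  have n2: "n \<ge> 2" and c1: "c \<ge> 1" using val by (auto simp: valid_instance_def)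
  define s where "s = sqrt (2*real c)/4"
  define D where "D = real (max_traffic n L)"
  define q where "q = sqrt (D / K)"
  define cost where "cost = real (routing_cost n r t0 t1)"
  have s0: "s > 0" using c1 by (simp add: s_def)
  have q0: "q \<ge> 0" using K1 by (simp add: q_def D_def)
  have "(\<Sum>i<r. \<Sum>(j,k)\<in>PP n. wt n j k * sqrt (real (t0 i j k + t1 i j k)))
      \<le> (\<Sum>i<r. real n * real (card (SS n t0 t1 i)) * s)"
    by (rule sum_mono) (use ring_bound[OF feas _ c1] in \<open>simp add: s_def\<close>)
  also have "\<dots> = real n * s * cost"
    by (simp add: cost_def cost_sum of_nat_sum sum_distrib_left mult.assoc mult.commute[of s])
  finally have U: "(\<Sum>i<r. \<Sum>(j,k)\<in>PP n. wt n j k * sqrt (real (t0 i j k + t1 i j k))) \<le> real n * s * cost" .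
  have "(\<Sum>i<r. \<Sum>(j,k)\<in>PP n. wt n j k * sqrt (real (t0 i j k + t1 i j k)))
      = (\<Sum>(j,k)\<in>PP n. wt n j k * (\<Sum>i<r. sqrt (real (t0 i j k + t1 i j k))))"
    by (subst sum.swap) (simp add: sum_distrib_left split_def)
  also have "\<dots> \<ge> (\<Sum>(j,k)\<in>PP n. wt n j k * q)"
  proof (rule sum_mono, clarify)
    fix j k assume jk: "(j,k) \<in> PP n"
    hence jk': "j \<in> {1..n}" "k \<in> {1..n}" "j < k" by (auto simp: PP_def)
    have W: "wt n j k \<ge> 0" using wt_props(4)[of j k n] jk' by auto
    have tr: "(\<Sum>i<r. t0 i j k + t1 i j k) = traffic L j k"
      using feas jk' unfolding feasible_routing_def by blast
    have "D \<le> K * real (traffic L j k)"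
      unfolding D_def by (rule max_traffic_le[OF n2 qu jk'(1,2)]) (use jk' in simp)
    hence "D / K \<le> real (traffic L j k)" using K1 by (simp add: divide_le_eq mult.commute)
    hence "q \<le> sqrt (real (traffic L j k))" by (simp add: q_def)
    also have "\<dots> = sqrt (\<Sum>i<r. real (t0 i j k + t1 i j k))"
      by (simp only: tr[symmetric] of_nat_sum)
    also have "\<dots> \<le> (\<Sum>i<r. sqrt (real (t0 i j k + t1 i j k)))"
      by (rule sqrt_sum_le) auto
    finally show "wt n j k * q \<le> wt n j k * (\<Sum>i<r. sqrt (real (t0 i j k + t1 i j k)))"
      by (rule mult_left_mono[OF _ W])
  qed
  finally have V: "(\<Sum>(j,k)\<in>PP n. wt n j k * q) \<le> real n * s * cost" using U by linarith
  have "(\<Sum>(j,k)\<in>PP n. wt n j k * q) = q * (\<Sum>(j,k)\<in>PP n. wt n j k)"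
    by (simp add: sum_distrib_left split_def mult.commute)
  also have "\<dots> = q * (real n * (real n ^ 2 - 1) / 12)" using wt_sum n2 by simp
  finally have "real n * (q * (real n ^ 2 - 1) / 12) \<le> real n * (s * cost)" using V by (simp add: algebra_simps)
  hence main: "q * (real n ^ 2 - 1) / 12 \<le> s * cost" using n2 by simp
  have nn: "real n ^ 2 - 1 \<ge> 0" using n2 by (simp add: one_le_power)
  have sq: "sqrt (D / (2 * real c * K)) = q / (4*s)"
    unfolding q_def s_def using c1 K1 by (simp add: real_sqrt_divide real_sqrt_mult field_simps)
  have "(real n ^ 2 - 1) * sqrt (D / (2 * real c * K)) / 4 = (q * (real n ^ 2 - 1)) / (16 * s)"
    unfolding sq using s0 by (simp add: field_simps)
  also have "\<dots> \<le> (q * (real n ^ 2 - 1)) / (12 * s)"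
    using s0 q0 nn by (intro divide_left_mono) (auto intro: mult_nonneg_nonneg)
  also have "\<dots> \<le> cost" using main s0 by (simp add: divide_le_eq field_simps)
  finally show ?thesis by (simp add: D_def cost_def)
qed

theorem corollary1:
  fixes n c :: nat and L :: "nat set list" and K :: real
  assumes "valid_instance n c L"
    and "K \<ge> 1"
    and "quasi_uniform K n L"
  shows "real (min_adms n c L) \<ge>
           (real n ^ 2 - 1) * sqrt (real (max_traffic n L) / (2 * real c * K)) / 4"
proof -
  let ?S = "{routing_cost n r t0 t1 | r t0 t1. feasible_routing n c L r t0 t1}"
  have "?S \<noteq> {}" using exists_feasible[OF assms(1)] by blast
  hence "Inf ?S \<in> ?S" by (rule Inf_nat_def1)
  then obtain r t0 t1 where "min_adms n c L = routing_cost n r t0 t1" "feasible_routing n c L r t0 t1"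
    unfolding min_adms_def by blast
  thus ?thesis using cost_bound[OF assms] by simp
qed

end
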